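(* There is a universal constant $c$ such that for every sufficiently large integer $N$ there are $N$ points $x_1,\dots,x_N$ on $\mathbb{S}^2$ such that for every unit vector $v\in\mathbb{S}^2$, at most $c\frac{\ln N}{\ln\ln N}$ of the points $x_i$ lie in the strip $\{x\in\mathbb{S}^2:|\langle v,x\rangle|\le\frac1N\}$.
   Context: $\mathbb{S}^2=\{x\in\mathbb{R}^3:|x|=1\}$. *)

theory Defs
  imports "HOL-Analysis.Analysis"
begin

end

theory Submission
  imports Defs "HOL-Real_Asymp.Real_Asymp"
begin


lemma fact_ge_pow_exp: "(real k / exp 1) ^ k \<le> fact k"
proof -
  have s: "(\<lambda>n. real k ^ n / fact n) sums exp (real k)"
    using exp_converges[of "real k"] by (simp add: divide_inverse mult.commute)
  have "(\<Sum>n\<in>{k}. real k ^ n / fact n) \<le> suminf (\<lambda>n. real k ^ n / fact n)"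
    by (rule sum_le_suminf) (use s in \<open>auto simp: sums_iff\<close>)
  then have "real k ^ k / fact k \<le> exp (real k)" using s by (simp add: sums_iff)
  moreover have "exp (real k) = exp 1 ^ k" by (metis exp_of_nat_mult mult.right_neutral)
  ultimately show ?thesis
    by (simp add: power_divide field_simps)
qed

lemma card_many:
  assumes "finite A" "S \<subseteq> A"
  shows "card {f \<in> PiE {..<N} (\<lambda>_. A). k \<le> card {i. i<N \<and> f i \<in> S}}
           \<le> (N choose k) * card S ^ k * card A ^ (N - k)"
proof -
  let ?I = "{I. I \<subseteq> {..<N} \<and> card I = k}"
  let ?F = "\<lambda>I. PiE {..<N} (\<lambda>i. if i \<in> I then S else A)"
  have sub: "{f \<in> PiE {..<N} (\<lambda>_. A). k \<le> card {i. i<N \<and> f i \<in> S}} \<subseteq> (\<Union>I\<in>?I. ?F I)"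
  proof
    fix f assume "f \<in> {f \<in> PiE {..<N} (\<lambda>_. A). k \<le> card {i. i<N \<and> f i \<in> S}}"
    then have f: "f \<in> PiE {..<N} (\<lambda>_. A)" "k \<le> card {i. i<N \<and> f i \<in> S}" by auto
    have "finite {i. i<N \<and> f i \<in> S}" by simp
    then obtain I where I: "I \<subseteq> {i. i<N \<and> f i \<in> S}" "card I = k"
      using obtain_subset_with_card_n[OF f(2)] by blast
    then have "f \<in> ?F I" using f(1) by (auto simp: PiE_iff)
    moreover have "I \<in> ?I" using I by auto
    ultimately show "f \<in> (\<Union>I\<in>?I. ?F I)" by blast
  qed
  have fin: "finite ?I" by (rule finite_subset[of _ "Pow {..<N}"]) auto
  have cardF: "card (?F I) = card S ^ k * card A ^ (N-k)" if "I \<in> ?I" for I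
  proof -
    have I: "I \<subseteq> {..<N}" "card I = k" using that by auto
    have "card (?F I) = (\<Prod>i<N. card (if i \<in> I then S else A))" by (simp add: card_PiE)
    also have "\<dots> = (\<Prod>i<N. if i \<in> I then card S else card A)" by (simp add: if_distrib)
    also have "\<dots> = (\<Prod>i\<in>{..<N} \<inter> {i. i \<in> I}. card S) * (\<Prod>i\<in>{..<N} \<inter> - {i. i \<in> I}. card A)"
      by (rule prod.If_cases) simp
    also have "{..<N} \<inter> {i. i \<in> I} = I" using I by auto
    also have "{..<N} \<inter> - {i. i \<in> I} = {..<N} - I" by auto
    finally have e: "card (?F I) = (\<Prod>i\<in>I. card S) * (\<Prod>i\<in>{..<N} - I. card A)" .
    have "card ({..<N} - I) = N - k" using I by (simp add: card_Diff_subset finite_subset)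
    then show ?thesis using I e by simp
  qed
  have finU: "finite (\<Union>I\<in>?I. ?F I)" using fin assms(1,2) by (auto intro!: finite_PiE dest: finite_subset)
  have "card {f \<in> PiE {..<N} (\<lambda>_. A). k \<le> card {i. i<N \<and> f i \<in> S}} \<le> card (\<Union>I\<in>?I. ?F I)"
    by (rule card_mono[OF finU sub])
  also have "\<dots> \<le> (\<Sum>I\<in>?I. card (?F I))" by (rule card_UN_le[OF fin])
  also have "\<dots> = card ?I * (card S ^ k * card A ^ (N-k))" using cardF by simp
  also have "card ?I = N choose k" using n_subsets[of "{..<N}" k] by simp
  finally show ?thesis by (simp add: mult.assoc)
qed

lemma card_noninj:
  assumes "finite A"
  shows "card {f \<in> PiE {..<N} (\<lambda>_. A). \<not> inj_on f {..<N}} \<le> N^2 * card A ^ (N - 1)"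
proof -
  let ?P = "{..<N} \<times> {..<N}"
  let ?F = "\<lambda>p. {f \<in> PiE {..<N} (\<lambda>_. A). fst p \<noteq> snd p \<and> f (fst p) = f (snd p)}"
  have sub: "{f \<in> PiE {..<N} (\<lambda>_. A). \<not> inj_on f {..<N}} \<subseteq> (\<Union>p\<in>?P. ?F p)"
    unfolding inj_on_def by force
  have cF: "card (?F p) \<le> card A ^ (N - 1)" if "p \<in> ?P" for p
  proof (cases "fst p = snd p")
    case True then show ?thesis by simp
  next
    case False
    obtain i j where p: "p = (i,j)" by (cases p)
    have ij: "i < N" "j < N" "i \<noteq> j" using that False p by auto
    have inj: "inj_on (\<lambda>f. f(i:=undefined)) (?F p)"
    proof (rule inj_onI)
      fix f g assume f: "f \<in> ?F p" and g: "g \<in> ?F p" and e: "f(i:=undefined) = g(i:=undefined)"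
      show "f = g"
      proof
        fix x show "f x = g x"
        proof (cases "x = i")
          case True
          have "f j = g j" using fun_cong[OF e, of j] ij by simp
          then show ?thesis using f g p True by auto
        next
          case False then show ?thesis using fun_cong[OF e, of x] by simp
        qed
      qed
    qed
    have im: "(\<lambda>f. f(i:=undefined)) ` (?F p) \<subseteq> PiE ({..<N} - {i}) (\<lambda>_. A)"
      by (auto simp: PiE_iff extensional_def split: if_splits)
    have "card (?F p) \<le> card (PiE ({..<N} - {i}) (\<lambda>_. A))"
      by (rule card_inj_on_le[OF inj im]) (use assms in \<open>auto intro: finite_PiE\<close>)
    also have "\<dots> = card A ^ (N - 1)" using ij by (simp add: card_PiE)
    finally show ?thesis .
  qed
  have finU: "finite (\<Union>p\<in>?P. ?F p)" using assms by (auto intro!: finite_PiE)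
  have "card {f \<in> PiE {..<N} (\<lambda>_. A). \<not> inj_on f {..<N}} \<le> card (\<Union>p\<in>?P. ?F p)"
    by (rule card_mono[OF finU sub])
  also have "\<dots> \<le> (\<Sum>p\<in>?P. card (?F p))" by (rule card_UN_le) simp
  also have "\<dots> \<le> card ?P * card A ^ (N - 1)" using sum_bounded_above[of ?P "\<lambda>p. card (?F p)" "card A ^ (N - 1)"] cF by simp
  finally show ?thesis by (simp add: power2_eq_square)
qed



lemma inner3: "inner (x::real^3) y = x$1*y$1 + x$2*y$2 + x$3*y$3"
  by (simp add: inner_vec_def sum_3)

lemma norm3sq: "norm (x::real^3) ^ 2 = (x$1)^2 + (x$2)^2 + (x$3)^2"
  by (subst power2_norm_eq_inner) (simp add: inner3 power2_eq_square)

lemma comp_le1: "norm (x::real^3) = 1 \<Longrightarrow> \<bar>x$i\<bar> \<le> 1"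
  using component_le_norm_cart[of x i] by simp

definition gv :: "nat \<Rightarrow> int \<times> int \<Rightarrow> real^3" where
  "gv M p = vector [real_of_int (fst p), real_of_int (snd p), real M]"

definition pt :: "nat \<Rightarrow> int \<times> int \<Rightarrow> real^3" where
  "pt M p = (1 / norm (gv M p)) *\<^sub>R gv M p"

lemma gv_comp [simp]: "gv M p $ 1 = fst p" "gv M p $ 2 = snd p" "gv M p $ 3 = real M"
  by (simp_all add: gv_def)

lemma norm_gv_pos: "M > 0 \<Longrightarrow> norm (gv M p) > 0"
proof -
  assume "M > 0"
  then have "gv M p $ 3 \<noteq> 0" by simp
  then have "gv M p \<noteq> 0" by (metis zero_index)
  then show ?thesis by simp
qed

lemma norm_pt: "M > 0 \<Longrightarrow> norm (pt M p) = 1"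
  using norm_gv_pos[of M p] by (simp add: pt_def)

lemma inj_pt: "M > 0 \<Longrightarrow> inj_on (pt M) UNIV"
proof (rule inj_onI)
  fix p p' assume M: "M > 0" and e: "pt M p = pt M p'"
  have n: "norm (gv M p) > 0" "norm (gv M p') > 0" using norm_gv_pos M by auto
  have "pt M p $ 3 = pt M p' $ 3" using e by simp
  then have "real M / norm (gv M p) = real M / norm (gv M p')" by (simp add: pt_def)
  then have nn: "norm (gv M p) = norm (gv M p')" using M n by (simp add: field_simps)
  have "gv M p = gv M p'"
  proof -
    have "gv M p = norm (gv M p) *\<^sub>R pt M p" using n by (simp add: pt_def)
    also have "\<dots> = norm (gv M p') *\<^sub>R pt M p'" using nn e by simp
    also have "\<dots> = gv M p'" using n by (simp add: pt_def)
    finally show ?thesis .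
  qed
  then have "fst p = fst p'" "snd p = snd p'"
    using gv_comp(1)[of M p] gv_comp(1)[of M p'] gv_comp(2)[of M p] gv_comp(2)[of M p'] by auto
  then show "p = p'" by (simp add: prod_eq_iff)
qed

lemma card_int_slab:
  fixes A :: "int set" and \<alpha> c h :: real
  assumes "\<alpha> \<noteq> 0" "h \<ge> 0" "finite A"
  shows "real (card {a\<in>A. \<bar>\<alpha> * a + c\<bar> \<le> h}) \<le> 2 * h / \<bar>\<alpha>\<bar> + 1"
proof -
  define m where "m = - c / \<alpha>"
  define r where "r = h / \<bar>\<alpha>\<bar>"
  have r0: "r \<ge> 0" using assms by (simp add: r_def)
  have sub: "{a\<in>A. \<bar>\<alpha> * a + c\<bar> \<le> h} \<subseteq> {\<lceil>m - r\<rceil>..\<lfloor>m + r\<rfloor>}"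
  proof
    fix a assume "a \<in> {a\<in>A. \<bar>\<alpha> * a + c\<bar> \<le> h}"
    then have "\<bar>\<alpha> * a + c\<bar> \<le> h" by simp
    moreover have "\<alpha> * a + c = \<alpha> * (a - m)" using assms(1) by (simp add: m_def field_simps)
    ultimately have "\<bar>\<alpha>\<bar> * \<bar>a - m\<bar> \<le> h" by (simp add: abs_mult)
    then have "\<bar>a - m\<bar> \<le> r" using assms(1) by (simp add: r_def field_simps)
    then show "a \<in> {\<lceil>m - r\<rceil>..\<lfloor>m + r\<rfloor>}" by (simp add: ceiling_le_iff le_floor_iff abs_le_iff)
  qed
  have "card {a\<in>A. \<bar>\<alpha> * a + c\<bar> \<le> h} \<le> card {\<lceil>m - r\<rceil>..\<lfloor>m + r\<rfloor>}"
    by (rule card_mono[OF _ sub]) simp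
  also have "\<dots> = nat (\<lfloor>m + r\<rfloor> - \<lceil>m - r\<rceil> + 1)" by simp
  finally have "real (card {a\<in>A. \<bar>\<alpha> * a + c\<bar> \<le> h}) \<le> real (nat (\<lfloor>m + r\<rfloor> - \<lceil>m - r\<rceil> + 1))"
    by linarith
  also have "\<dots> \<le> 2 * r + 1"
  proof (cases "\<lfloor>m + r\<rfloor> - \<lceil>m - r\<rceil> + 1 \<ge> 0")
    case True
    have "real_of_int \<lfloor>m + r\<rfloor> \<le> m + r" by simp
    moreover have "real_of_int \<lceil>m - r\<rceil> \<ge> m - r" by simp
    moreover have "real (nat (\<lfloor>m + r\<rfloor> - \<lceil>m - r\<rceil> + 1)) = real_of_int (\<lfloor>m + r\<rfloor> - \<lceil>m - r\<rceil> + 1)"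
      using True by simp
    ultimately show ?thesis by linarith
  next
    case False then show ?thesis using r0 by simp
  qed
  finally show ?thesis by (simp add: r_def)
qed



definition GG :: "nat \<Rightarrow> (int \<times> int) set" where
  "GG M = {- int M..int M} \<times> {- int M..int M}"

lemma finite_GG [simp]: "finite (GG M)" by (simp add: GG_def)

lemma card_GG: "card (GG M) = (2*M+1)^2"
  by (simp add: GG_def card_cartesian_product power2_eq_square nat_add_distrib nat_mult_distrib)

lemma inner_pt: "M > 0 \<Longrightarrow> inner v (pt M p) = inner v (gv M p) / norm (gv M p)"
  by (simp add: pt_def)

lemma norm_gv_le: "p \<in> GG M \<Longrightarrow> norm (gv M p) \<le> 2 * real M"
proof -
  assume p: "p \<in> GG M"
  have a: "\<bar>real_of_int (fst p)\<bar> \<le> real M" "\<bar>real_of_int (snd p)\<bar> \<le> real M"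
    using p by (auto simp: GG_def abs_le_iff)
  have s1: "(real_of_int (fst p))^2 \<le> (real M)^2" using a(1) abs_le_square_iff by force
  have s2: "(real_of_int (snd p))^2 \<le> (real M)^2" using a(2) abs_le_square_iff by force
  have "norm (gv M p)^2 \<le> (2 * real M)^2" by (simp add: norm3sq power_mult_distrib) (use s1 s2 zero_le_power2[of "real M"] in linarith)
  then show ?thesis by (rule power2_le_imp_le) simp
qed

lemma strip_count:
  fixes v :: "real^3" and M :: nat and d :: real
  assumes v: "norm v = 1" and M: "M > 0" and d: "0 \<le> d" "d \<le> 1/8"
  shows "real (card {p \<in> GG M. \<bar>inner v (pt M p)\<bar> \<le> d}) \<le> (2*M+1) * (16*d*M + 1)"
proof -
  let ?S = "{p \<in> GG M. \<bar>inner v (pt M p)\<bar> \<le> d}"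
  let ?R = "{- int M..int M}"
  define h where "h = 2 * d * M"
  have h0: "h \<ge> 0" using d by (simp add: h_def)
  have key: "\<bar>v$1 * fst p + v$2 * snd p + v$3 * M\<bar> \<le> h" if "p \<in> ?S" for p
  proof -
    have p: "p \<in> GG M" "\<bar>inner v (pt M p)\<bar> \<le> d" using that by auto
    have n: "norm (gv M p) > 0" using norm_gv_pos M by auto
    have "\<bar>inner v (gv M p)\<bar> / norm (gv M p) \<le> d" using p(2) M n by (simp add: inner_pt)
    then have "\<bar>inner v (gv M p)\<bar> \<le> d * norm (gv M p)" using n by (simp add: field_simps)
    also have "\<dots> \<le> d * (2 * M)" using norm_gv_le[OF p(1)] d by (simp add: mult_left_mono)
    finally have "\<bar>inner v (gv M p)\<bar> \<le> h" by (simp add: h_def mult_ac)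
    moreover have "inner v (gv M p) = v$1 * fst p + v$2 * snd p + v$3 * M" by (simp add: inner3)
    ultimately show ?thesis by simp
  qed
  have fin: "finite ?R" by simp
  have cardR: "card ?R = 2*M+1" by simp
  consider (one) "\<bar>v$1\<bar> \<ge> 1/4" | (two) "\<bar>v$2\<bar> \<ge> 1/4" | (three) "\<bar>v$1\<bar> < 1/4" "\<bar>v$2\<bar> < 1/4" by linarith
  then show ?thesis
  proof cases
    case one
    let ?T = "\<lambda>b. {a\<in>?R. \<bar>v$1 * a + (v$2 * b + v$3 * M)\<bar> \<le> h}"
    have finT: "finite (?T b)" for b by (rule finite_subset[of _ ?R]) auto
    have sub: "?S \<subseteq> (\<Union>b\<in>?R. (\<lambda>a. (a,b)) ` ?T b)"
    proof
      fix p assume "p \<in> ?S"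
      then have "p \<in> GG M" "\<bar>v$1 * fst p + v$2 * snd p + v$3 * M\<bar> \<le> h" using key by auto
      then show "p \<in> (\<Union>b\<in>?R. (\<lambda>a. (a,b)) ` ?T b)"
        by (cases p) (auto simp: GG_def add.assoc image_iff)
    qed
    have "card ?S \<le> card (\<Union>b\<in>?R. (\<lambda>a. (a,b)) ` ?T b)" by (rule card_mono[OF _ sub]) (intro finite_UN_I finite_imageI finT, simp)
    also have "\<dots> \<le> (\<Sum>b\<in>?R. card ((\<lambda>a. (a,b)) ` ?T b))" by (rule card_UN_le) simp
    also have "\<dots> \<le> (\<Sum>b\<in>?R. card (?T b))" by (rule sum_mono) (rule card_image_le, rule finT)
    finally have c: "card ?S \<le> (\<Sum>b\<in>?R. card (?T b))" .
    have "real (card ?S) \<le> (\<Sum>b\<in>?R. real (card (?T b)))"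
      using c by (simp only: of_nat_sum[symmetric] of_nat_le_iff)
    also have "\<dots> \<le> (\<Sum>b\<in>?R. 2 * h / \<bar>v$1\<bar> + 1)"
      by (rule sum_mono, rule card_int_slab) (use one h0 in auto)
    also have "\<dots> = (2*M+1) * (2 * h / \<bar>v$1\<bar> + 1)" using cardR by simp
    also have "\<dots> \<le> (2*M+1) * (16*d*M + 1)"
    proof -
      have pos: "\<bar>v$1\<bar> > 0" using one by linarith
      have "2*h = 8*h*(1/4)" by simp
      also have "\<dots> \<le> 8*h*\<bar>v$1\<bar>" by (rule mult_left_mono) (use one h0 in auto)
      finally have "2*h \<le> 8*h*\<bar>v$1\<bar>" .
      then have "2 * h / \<bar>v$1\<bar> \<le> 8 * h" using pos by (simp add: divide_le_eq)
      then show ?thesis by (simp add: h_def)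
    qed
    finally show ?thesis .
  next
    case two
    let ?T = "\<lambda>b. {a\<in>?R. \<bar>v$2 * a + (v$1 * b + v$3 * M)\<bar> \<le> h}"
    have finT: "finite (?T b)" for b by (rule finite_subset[of _ ?R]) auto
    have sub: "?S \<subseteq> (\<Union>b\<in>?R. (\<lambda>a. (b,a)) ` ?T b)"
    proof
      fix p assume "p \<in> ?S"
      then have "p \<in> GG M" "\<bar>v$1 * fst p + v$2 * snd p + v$3 * M\<bar> \<le> h" using key by auto
      then show "p \<in> (\<Union>b\<in>?R. (\<lambda>a. (b,a)) ` ?T b)"
        by (cases p) (auto simp: GG_def add.assoc add.left_commute image_iff)
    qed
    have "card ?S \<le> card (\<Union>b\<in>?R. (\<lambda>a. (b,a)) ` ?T b)" by (rule card_mono[OF _ sub]) (intro finite_UN_I finite_imageI finT, simp)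
    also have "\<dots> \<le> (\<Sum>b\<in>?R. card ((\<lambda>a. (b,a)) ` ?T b))" by (rule card_UN_le) simp
    also have "\<dots> \<le> (\<Sum>b\<in>?R. card (?T b))" by (rule sum_mono) (rule card_image_le, rule finT)
    finally have c: "card ?S \<le> (\<Sum>b\<in>?R. card (?T b))" .
    have "real (card ?S) \<le> (\<Sum>b\<in>?R. real (card (?T b)))"
      using c by (simp only: of_nat_sum[symmetric] of_nat_le_iff)
    also have "\<dots> \<le> (\<Sum>b\<in>?R. 2 * h / \<bar>v$2\<bar> + 1)"
      by (rule sum_mono, rule card_int_slab) (use two h0 in auto)
    also have "\<dots> = (2*M+1) * (2 * h / \<bar>v$2\<bar> + 1)" using cardR by simp
    also have "\<dots> \<le> (2*M+1) * (16*d*M + 1)"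
    proof -
      have pos: "\<bar>v$2\<bar> > 0" using two by linarith
      have "2*h = 8*h*(1/4)" by simp
      also have "\<dots> \<le> 8*h*\<bar>v$2\<bar>" by (rule mult_left_mono) (use two h0 in auto)
      finally have "2*h \<le> 8*h*\<bar>v$2\<bar>" .
      then have "2 * h / \<bar>v$2\<bar> \<le> 8 * h" using pos by (simp add: divide_le_eq)
      then show ?thesis by (simp add: h_def)
    qed
    finally show ?thesis .
  next
    case three
    have "?S = {}"
    proof (rule ccontr)
      assume "?S \<noteq> {}"
      then obtain p where p: "p \<in> ?S" by blast
      have k: "\<bar>v$1 * fst p + v$2 * snd p + v$3 * M\<bar> \<le> h" using key p by blast
      have a: "\<bar>real_of_int (fst p)\<bar> \<le> real M" "\<bar>real_of_int (snd p)\<bar> \<le> real M"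
        using p by (auto simp: GG_def abs_le_iff)
      have "(v$1)^2 + (v$2)^2 + (v$3)^2 = 1" using norm3sq[of v] v by simp
      moreover have "(v$1)^2 \<le> 1/16" "(v$2)^2 \<le> 1/16"
        using three abs_le_square_iff[of "v$1" "1/4"] abs_le_square_iff[of "v$2" "1/4"]
        by (auto simp: power2_eq_square)
      ultimately have "(v$3)^2 > (3/4)^2" by (simp add: power2_eq_square)
      then have v3: "\<bar>v$3\<bar> > 3/4" using power2_less_imp_less[of "3/4" "\<bar>v$3\<bar>"] by simp
      have t1: "\<bar>v$1 * fst p\<bar> \<le> 1/4 * M" unfolding abs_mult
        by (rule mult_mono) (use three a in auto)
      have t2: "\<bar>v$2 * snd p\<bar> \<le> 1/4 * M" unfolding abs_mult
        by (rule mult_mono) (use three a in auto)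
      have t3: "\<bar>v$3 * M\<bar> > 3/4 * M" using v3 M by (simp add: abs_mult)
      have "(8*d)*real M \<le> 1*real M" by (rule mult_right_mono) (use d in auto)
      then have "h \<le> 1/4 * M" by (simp add: h_def)
      then show False using k t1 t2 t3 by linarith
    qed
    then have c0: "card ?S = 0" by (simp only: card.empty)
    have r0: "real (card ?S) = 0" using c0 by (simp only: of_nat_eq_0_iff)
    show ?thesis unfolding r0 by (intro mult_nonneg_nonneg) (use d in auto)
  qed
qed



definition rnd :: "nat \<Rightarrow> real^3 \<Rightarrow> real^3" where
  "rnd N v = vector [of_int \<lfloor>N * v$1\<rfloor> / N, of_int \<lfloor>N * v$2\<rfloor> / N, of_int \<lfloor>N * v$3\<rfloor> / N]"

definition Wg :: "nat \<Rightarrow> (real^3) set" where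
  "Wg N = (\<lambda>(i,j,l). vector [real_of_int i / N, real_of_int j / N, real_of_int l / N])
           ` ({-int N..int N} \<times> {-int N..int N} \<times> {-int N..int N})"

lemma floor_in: assumes "N > 0" "\<bar>x\<bar> \<le> 1" shows "\<lfloor>real N * x\<rfloor> \<in> {-int N..int N}"
proof -
  have "real N * (-1) \<le> real N * x" "real N * x \<le> real N * 1"
    by (rule mult_left_mono, use assms in \<open>auto simp: abs_le_iff\<close>)+
  then show ?thesis by (simp add: le_floor_iff floor_le_iff)
qed

lemma rnd_in: assumes "norm v = 1" "N > 0" shows "rnd N v \<in> Wg N"
proof -
  have "(\<lfloor>real N * v$1\<rfloor>, \<lfloor>real N * v$2\<rfloor>, \<lfloor>real N * v$3\<rfloor>) \<in> {-int N..int N} \<times> {-int N..int N} \<times> {-int N..int N}"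
    using floor_in[OF assms(2) comp_le1[OF assms(1)]] by blast
  then show ?thesis unfolding Wg_def rnd_def by (rule rev_image_eqI) simp
qed

lemma floor_close: assumes "N > 0" shows "\<bar>of_int \<lfloor>real N * x\<rfloor> / real N - x\<bar> \<le> 1 / real N"
proof -
  have a: "of_int \<lfloor>real N * x\<rfloor> \<le> real N * x" "real N * x < of_int \<lfloor>real N * x\<rfloor> + 1"
    by linarith+
  have "of_int \<lfloor>real N * x\<rfloor> / real N - x = (of_int \<lfloor>real N * x\<rfloor> - real N * x) / real N"
    using assms by (simp add: field_simps)
  moreover have "\<bar>of_int \<lfloor>real N * x\<rfloor> - real N * x\<bar> \<le> 1" using a by linarith
  ultimately show ?thesis using assms by (simp add: abs_div_pos divide_right_mono)
qed

lemma rnd_inner: assumes "norm y = 1" "N > 0"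
  shows "\<bar>inner v y - inner (rnd N v) y\<bar> \<le> 3 / real N"
proof -
  have e: "inner v y - inner (rnd N v) y =
     (v$1 - of_int \<lfloor>N * v$1\<rfloor> / N) * y$1 + (v$2 - of_int \<lfloor>N * v$2\<rfloor> / N) * y$2 + (v$3 - of_int \<lfloor>N * v$3\<rfloor> / N) * y$3"
    by (simp add: inner3 rnd_def algebra_simps)
  have b: "\<bar>(v$j - of_int \<lfloor>N * v$j\<rfloor> / N) * y$j\<bar> \<le> 1 / real N" for j
  proof -
    have "\<bar>(v$j - of_int \<lfloor>N * v$j\<rfloor> / N) * y$j\<bar> = \<bar>of_int \<lfloor>N * v$j\<rfloor> / N - v$j\<bar> * \<bar>y$j\<bar>"
      by (simp add: abs_mult abs_minus_commute)
    also have "\<dots> \<le> 1 / real N * 1"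
      by (rule mult_mono) (use floor_close[OF assms(2)] comp_le1[OF assms(1)] in auto)
    finally show ?thesis by simp
  qed
  show ?thesis unfolding e using b[of 1] b[of 2] b[of 3] by (simp add: abs_le_iff)
qed



lemma fact_big:
  fixes N k :: nat and t :: real
  assumes t1: "57 * exp 1 \<le> t" and kt: "t \<le> real k"
    and t3: "ln 2 + 3 * ln (2 * real N + 1) < t * ln (t / (57 * exp 1))"
  shows "2 * (2 * real N + 1)^3 * 57^k \<le> fact k"
proof -
  define b where "b = t / (57 * exp 1)"
  have b1: "1 \<le> b" using t1 by (simp add: b_def field_simps)
  have f1: "fact k \<ge> (real k / exp 1)^k" by (rule fact_ge_pow_exp)
  have f2: "(real k / exp 1)^k = 57^k * (real k / (57 * exp 1))^k"
  proof -
    have "real k / exp 1 = 57 * (real k / (57 * exp 1))" by simp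
    then show ?thesis by (simp only: power_mult_distrib)
  qed
  have f3: "b^k \<le> (real k / (57 * exp 1))^k"
  proof (rule power_mono)
    show "b \<le> real k / (57 * exp 1)" unfolding b_def by (rule divide_right_mono) (use kt in auto)
  qed (use b1 in linarith)
  have f4: "b powr t \<le> b^k"
  proof -
    have "b powr t \<le> b powr (real k)" by (rule powr_mono) (use kt b1 in auto)
    also have "\<dots> = b^k" using b1 by (simp add: powr_realpow)
    finally show ?thesis .
  qed
  have f5: "2 * (2 * real N + 1)^3 < b powr t"
  proof -
    have "b powr t = exp (t * ln b)" using b1 by (simp add: powr_def)
    moreover have "exp (ln 2 + 3 * ln (2 * real N + 1)) = 2 * (2 * real N + 1)^3"
    proof -
      have "exp (3 * ln (2 * real N + 1)) = exp (ln (2 * real N + 1)) ^ 3"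
        by (metis exp_of_nat_mult of_nat_numeral)
      then show ?thesis by (simp add: exp_add)
    qed
    ultimately show ?thesis using t3 unfolding b_def by (metis exp_less_mono)
  qed
  have "2 * (2 * real N + 1)^3 \<le> (real k / (57 * exp 1))^k" using f3 f4 f5 by linarith
  then have g: "57^k * (2 * (2 * real N + 1)^3) \<le> 57^k * (real k / (57 * exp 1))^k"
    by (rule mult_left_mono) simp
  have "2 * (2 * real N + 1)^3 * 57^k = 57^k * (2 * (2 * real N + 1)^3)" by (rule mult.commute)
  also note g
  also have "57^k * (real k / (57 * exp 1))^k = (real k / exp 1)^k" by (rule f2[symmetric])
  also note f1
  finally show ?thesis .
qed



lemma main_fixed:
  fixes N :: nat and t :: real
  assumes N57: "N \<ge> 57" and t1: "57 * exp 1 \<le> t" and t2: "t + 1 \<le> real N"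
    and t3: "ln 2 + 3 * ln (2 * real N + 1) < t * ln (t / (57 * exp 1))"
  shows "\<exists>x::nat \<Rightarrow> real^3. inj_on x {..<N} \<and> (\<forall>i<N. norm (x i) = 1) \<and>
           (\<forall>v::real^3. norm v = 1 \<longrightarrow>
              real (card {i. i < N \<and> \<bar>v \<bullet> x i\<bar> \<le> 1 / real N}) \<le> t)"
proof -
  define k where "k = nat \<lceil>t\<rceil>"
  have t0: "t > 0" using t1 by (smt (verit) exp_gt_zero)
  have rk: "real k = real_of_int \<lceil>t\<rceil>" using t0 by (simp add: k_def)
  have kt: "t \<le> real k" "real k < t + 1" using ceiling_correct[of t] rk by linarith+
  have kN: "k \<le> N" using kt t2 by linarith
  have N0: "N > 0" using N57 by simp
  define M where "M = N^2"
  have M0: "M > 0" using N0 by (simp add: M_def)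
  define G where "G = GG M"
  define q where "q = card G"
  have q_eq: "real q = (2 * real M + 1)^2" by (simp add: q_def G_def card_GG)
  define T where "T w = {p\<in>G. \<bar>inner w (pt M p)\<bar> \<le> 4 / real N}" for w
  define s where "s = (2 * real M + 1) * (16 * (7 / real N) * real M + 1)"
  define W where "W = {w\<in>Wg N. real (card (T w)) \<le> s}"
  define P where "P = PiE {..<N} (\<lambda>_. G)"
  define B1 where "B1 w = {f\<in>P. k \<le> card {i. i<N \<and> f i \<in> T w}}" for w
  define B2 where "B2 = {f\<in>P. \<not> inj_on f {..<N}}"
  define Bad where "Bad = (\<Union>w\<in>W. B1 w) \<union> B2"
  have finG: "finite G" by (simp add: G_def)
  have finP: "finite P" unfolding P_def using finG by (intro finite_PiE) auto
  have cP: "card P = q^N" by (simp add: P_def card_PiE q_def)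
  have finWg: "finite (Wg N)" by (simp add: Wg_def)
  have finW: "finite W" using finWg by (simp add: W_def)
  have cW: "real (card W) \<le> (2 * real N + 1)^3"
  proof -
    have "card W \<le> card (Wg N)" by (rule card_mono[OF finWg]) (auto simp: W_def)
    also have "\<dots> \<le> card ({-int N..int N} \<times> {-int N..int N} \<times> {-int N..int N})"
      unfolding Wg_def by (rule card_image_le) simp
    also have "\<dots> = (2 * N + 1)^3"
    proof -
      have cR: "card {-int N..int N} = 2*N+1" by simp
      show ?thesis by (simp only: card_cartesian_product cR power3_eq_cube)
    qed
    finally have "real (card W) \<le> real ((2 * N + 1)^3)" by (simp only: of_nat_le_iff)
    then show ?thesis by (simp add: add.commute)
  qed
  have sq: "s \<le> 57 * real q / real N"
  proof -
    have NM: "real N \<le> 2 * real M" using N0 by (simp add: M_def power2_eq_square)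
    have "16 * (7 / real N) * real M + 1 = (112 * real M + real N) / real N" using N0 by (simp add: field_simps)
    also have "\<dots> \<le> (57 * (2 * real M + 1)) / real N" by (rule divide_right_mono) (use NM in auto)
    finally have a: "16 * (7 / real N) * real M + 1 \<le> 57 * (2 * real M + 1) / real N" .
    have "s \<le> (2 * real M + 1) * (57 * (2 * real M + 1) / real N)"
      unfolding s_def by (rule mult_left_mono[OF a]) simp
    also have "\<dots> = 57 * real q / real N" by (simp add: q_eq power2_eq_square)
    finally show ?thesis .
  qed
  have binom: "real (N choose k) \<le> real N ^ k / fact k"
  proof -
    have "real ((N choose k) * fact k) \<le> real (N^k)" using binomial_fact_pow[of N k] by (simp only: of_nat_le_iff)
    then have "real (N choose k) * fact k \<le> real N ^ k" by simp
    then show ?thesis by (simp add: field_simps)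
  qed
  have e1: "real (card (B1 w)) \<le> 57^k / fact k * real q ^ N" if "w \<in> W" for w
  proof -
    have TG: "T w \<subseteq> G" by (auto simp: T_def)
    have cT: "real (card (T w)) \<le> 57 * real q / real N" using that sq by (simp add: W_def)
    have "card (B1 w) \<le> (N choose k) * card (T w) ^ k * q ^ (N - k)"
      unfolding B1_def P_def q_def by (rule card_many[OF finG TG])
    then have "real (card (B1 w)) \<le> real ((N choose k) * card (T w) ^ k * q ^ (N - k))"
      by (simp only: of_nat_le_iff)
    also have "\<dots> = real (N choose k) * real (card (T w)) ^ k * real q ^ (N - k)" by simp
    also have "\<dots> \<le> (real N ^ k / fact k) * (57 * real q / real N) ^ k * real q ^ (N - k)"
      by (intro mult_right_mono mult_mono power_mono binom cT) auto
    also have "\<dots> = 57^k / fact k * (real q ^ k * real q ^ (N - k))"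
      using N0 by (simp add: power_divide power_mult_distrib field_simps)
    also have "real q ^ k * real q ^ (N - k) = real q ^ N" using kN by (simp add: power_add[symmetric])
    finally show ?thesis .
  qed
  have q4: "4 * real N ^ 2 \<le> real q"
  proof -
    have n1: "(1::real) \<le> real N" using N0 by simp
    have "1*1 \<le> real N * real N" by (rule mult_mono) (use n1 in auto)
    then have "4 * real N ^ 2 \<le> (2 * real M)^2" using N0 by (simp add: M_def power2_eq_square)
    also have "\<dots> \<le> (2 * real M + 1)^2" by (rule power_mono) auto
    finally show ?thesis by (simp add: q_eq)
  qed
  have "0 < 4 * real N ^ 2" using N0 by simp
  then have qpos: "real q > 0" using q4 by linarith
  have e2: "real (card B2) \<le> real q ^ N / 4"
  proof -
    have "card B2 \<le> N^2 * q ^ (N - 1)" unfolding B2_def P_def q_def by (rule card_noninj[OF finG])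
    then have "real (card B2) \<le> real (N^2 * q ^ (N - 1))" by (simp only: of_nat_le_iff)
    also have "\<dots> = real N ^ 2 * real q ^ (N - 1)" by simp
    also have "\<dots> \<le> (real q / 4) * real q ^ (N - 1)" by (rule mult_right_mono) (use q4 in auto)
    also have "\<dots> = real q ^ N / 4"
    proof -
      have "real q * real q ^ (N - 1) = real q ^ N" using N0 by (cases N) simp_all
      then show ?thesis by simp
    qed
    finally show ?thesis .
  qed
  have fk: "2 * (2 * real N + 1)^3 * 57^k \<le> fact k" by (rule fact_big[OF t1 kt(1) t3])
  have fkpos: "(0::real) < fact k" by simp
  have cBad: "card Bad < card P"
  proof -
    have h: "(2 * real N + 1)^3 * 57^k / fact k \<le> 1/2"
      using fk fkpos by (simp add: divide_le_eq)
    have "card Bad \<le> card (\<Union>w\<in>W. B1 w) + card B2" unfolding Bad_def by (rule card_Un_le)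
    also have "card (\<Union>w\<in>W. B1 w) \<le> (\<Sum>w\<in>W. card (B1 w))" by (rule card_UN_le[OF finW])
    finally have "real (card Bad) \<le> real ((\<Sum>w\<in>W. card (B1 w)) + card B2)" by (simp only: of_nat_le_iff)
    also have "\<dots> = (\<Sum>w\<in>W. real (card (B1 w))) + real (card B2)" by simp
    also have "\<dots> \<le> real (card W) * (57^k / fact k * real q ^ N) + real q ^ N / 4"
      using sum_bounded_above[of W "\<lambda>w. real (card (B1 w))" "57^k / fact k * real q ^ N"] e1 e2 by simp
    also have "\<dots> \<le> (2 * real N + 1)^3 * (57^k / fact k * real q ^ N) + real q ^ N / 4"
      by (intro add_right_mono mult_right_mono cW) simp
    also have "(2 * real N + 1)^3 * (57^k / fact k * real q ^ N) = ((2 * real N + 1)^3 * 57^k / fact k) * real q ^ N"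
      by simp
    also have "((2 * real N + 1)^3 * 57^k / fact k) * real q ^ N + real q ^ N / 4 \<le> (1/2) * real q ^ N + real q ^ N / 4"
      by (intro add_right_mono mult_right_mono h) simp
    also have "(1/2) * real q ^ N + real q ^ N / 4 < real q ^ N" using qpos by simp
    finally have "real (card Bad) < real (card P)" using cP by simp
    then show ?thesis by simp
  qed
  have "\<not> P \<subseteq> Bad"
  proof
    assume "P \<subseteq> Bad"
    then have "card P \<le> card Bad" by (intro card_mono) (auto simp: Bad_def B1_def B2_def finW finP)
    then show False using cBad by simp
  qed
  then obtain f where fP: "f \<in> P" and fB: "f \<notin> Bad" by blast
  define x where "x = pt M \<circ> f"
  have fG: "f i \<in> G" if "i < N" for i using fP that by (auto simp: P_def)
  have injf: "inj_on f {..<N}" using fP fB by (auto simp: Bad_def B2_def)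
  have "inj_on x {..<N}" unfolding x_def
    by (rule comp_inj_on[OF injf]) (rule inj_on_subset[OF inj_pt[OF M0]], simp)
  moreover have "\<forall>i<N. norm (x i) = 1" using norm_pt[OF M0] by (simp add: x_def)
  moreover have "real (card {i. i < N \<and> \<bar>v \<bullet> x i\<bar> \<le> 1 / real N}) \<le> t" if v: "norm v = 1" for v
  proof -
    define w where "w = rnd N v"
    have wWg: "w \<in> Wg N" unfolding w_def by (rule rnd_in[OF v N0])
    have close: "\<bar>inner v (pt M p) - inner w (pt M p)\<bar> \<le> 3 / real N" for p
      unfolding w_def by (rule rnd_inner[OF norm_pt[OF M0] N0])
    have "T w \<subseteq> {p \<in> GG M. \<bar>inner v (pt M p)\<bar> \<le> 7 / real N}"
    proof
      fix p assume "p \<in> T w"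
      then have "p \<in> GG M" "\<bar>inner w (pt M p)\<bar> \<le> 4 / real N" by (auto simp: T_def G_def)
      moreover have "\<bar>inner v (pt M p)\<bar> \<le> 7 / real N" using close[of p] calculation(2) by simp
      ultimately show "p \<in> {p \<in> GG M. \<bar>inner v (pt M p)\<bar> \<le> 7 / real N}" by simp
    qed
    then have "card (T w) \<le> card {p \<in> GG M. \<bar>inner v (pt M p)\<bar> \<le> 7 / real N}"
      by (intro card_mono) auto
    then have "real (card (T w)) \<le> real (card {p \<in> GG M. \<bar>inner v (pt M p)\<bar> \<le> 7 / real N})"
      by (simp only: of_nat_le_iff)
    also have "\<dots> \<le> (2*M+1) * (16*(7 / real N)*M + 1)"
      by (rule strip_count[OF v M0]) (use N57 in auto)
    finally have "real (card (T w)) \<le> s" unfolding s_def by (simp add: add.commute)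
    then have wW: "w \<in> W" using wWg by (simp add: W_def)
    have nk: "\<not> k \<le> card {i. i<N \<and> f i \<in> T w}" using fB fP wW by (auto simp: Bad_def B1_def)
    have sub: "{i. i < N \<and> \<bar>v \<bullet> x i\<bar> \<le> 1 / real N} \<subseteq> {i. i<N \<and> f i \<in> T w}"
    proof
      fix i assume i: "i \<in> {i. i < N \<and> \<bar>v \<bullet> x i\<bar> \<le> 1 / real N}"
      have d4: "4 / real N = 1/real N + 3/real N" by (subst add_divide_distrib[symmetric]) simp
      have "\<bar>inner v (pt M (f i))\<bar> \<le> 1 / real N" using i by (simp add: x_def)
      then have "\<bar>inner w (pt M (f i))\<bar> \<le> 4 / real N" using close[of "f i"] d4 by linarith
      then show "i \<in> {i. i<N \<and> f i \<in> T w}" using i fG by (simp add: T_def)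
    qed
    have "card {i. i < N \<and> \<bar>v \<bullet> x i\<bar> \<le> 1 / real N} \<le> card {i. i<N \<and> f i \<in> T w}"
      by (rule card_mono[OF _ sub]) simp
    then have "card {i. i < N \<and> \<bar>v \<bullet> x i\<bar> \<le> 1 / real N} + 1 \<le> k" using nk by simp
    then have "real (card {i. i < N \<and> \<bar>v \<bullet> x i\<bar> \<le> 1 / real N}) + 1 \<le> real k" by linarith
    then show ?thesis using kt by linarith
  qed
  ultimately show ?thesis by blast
qed


lemma asymp_conds:
  "eventually (\<lambda>x::real. 57 \<le> x \<and> 57 * exp 1 \<le> 8 * ln x / ln (ln x) \<and>
      8 * ln x / ln (ln x) + 1 \<le> x \<and>
      ln 2 + 3 * ln (2 * x + 1) < 8 * ln x / ln (ln x) * ln (8 * ln x / ln (ln x) / (57 * exp 1))) at_top"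
proof -
  have e1: "eventually (\<lambda>x::real. 57 \<le> x) at_top" by real_asymp
  have e2: "eventually (\<lambda>x::real. 57 * exp 1 \<le> 8 * ln x / ln (ln x)) at_top" by real_asymp
  have e3: "eventually (\<lambda>x::real. 8 * ln x / ln (ln x) + 1 \<le> x) at_top" by real_asymp
  have e4: "eventually (\<lambda>x::real. ln 2 + 3 * ln (2 * x + 1) < 8 * ln x / ln (ln x) * ln (8 * ln x / ln (ln x) / (57 * exp 1))) at_top"
    by real_asymp
  show ?thesis using e1 e2 e3 e4 by (intro eventually_conj) auto
qed

theorem mainTheorem12:
  shows "\<exists>c::real. \<exists>N0::nat. \<forall>N\<ge>N0. \<exists>x :: nat \<Rightarrow> real^3.
           inj_on x {..<N} \<and> (\<forall>i<N. norm (x i) = 1) \<and>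
           (\<forall>v :: real^3. norm v = 1 \<longrightarrow>
              real (card {i. i < N \<and> \<bar>v \<bullet> x i\<bar> \<le> 1 / real N})
                \<le> c * ln (real N) / ln (ln (real N)))"
proof -
  have "eventually (\<lambda>N::nat. 57 \<le> real N \<and> 57 * exp 1 \<le> 8 * ln (real N) / ln (ln (real N)) \<and>
      8 * ln (real N) / ln (ln (real N)) + 1 \<le> real N \<and>
      ln 2 + 3 * ln (2 * real N + 1) < 8 * ln (real N) / ln (ln (real N)) * ln (8 * ln (real N) / ln (ln (real N)) / (57 * exp 1))) sequentially"
    using filterlim_real_sequentially asymp_conds by (rule filterlim_iff[THEN iffD1, rule_format])
  then obtain N0 where N0: "\<And>N. N \<ge> N0 \<Longrightarrow> 57 \<le> real N \<and> 57 * exp 1 \<le> 8 * ln (real N) / ln (ln (real N)) \<and>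
      8 * ln (real N) / ln (ln (real N)) + 1 \<le> real N \<and>
      ln 2 + 3 * ln (2 * real N + 1) < 8 * ln (real N) / ln (ln (real N)) * ln (8 * ln (real N) / ln (ln (real N)) / (57 * exp 1))"
    unfolding eventually_sequentially by blast
  have "\<forall>N\<ge>N0. \<exists>x :: nat \<Rightarrow> real^3.
           inj_on x {..<N} \<and> (\<forall>i<N. norm (x i) = 1) \<and>
           (\<forall>v :: real^3. norm v = 1 \<longrightarrow>
              real (card {i. i < N \<and> \<bar>v \<bullet> x i\<bar> \<le> 1 / real N})
                \<le> 8 * ln (real N) / ln (ln (real N)))"
  proof (intro allI impI)
    fix N assume "N \<ge> N0"
    note c = N0[OF this]
    show "\<exists>x :: nat \<Rightarrow> real^3.
           inj_on x {..<N} \<and> (\<forall>i<N. norm (x i) = 1) \<and>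
           (\<forall>v :: real^3. norm v = 1 \<longrightarrow>
              real (card {i. i < N \<and> \<bar>v \<bullet> x i\<bar> \<le> 1 / real N})
                \<le> 8 * ln (real N) / ln (ln (real N)))"
      by (rule main_fixed) (use c in auto)
  qed
  then show ?thesis by blast
qed

end
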